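(* (i) If the language $L(\mathcal{A})$ accepted by the NFA $\mathcal{A}$ is finite, then $\mathcal{H}_\kappa(L_1,L_2)$ is regular. (ii) If $L(\mathcal{A})$ is infinite and either $L_1$ is finite or $L_2$ is finite, then $\mathcal{H}_\kappa(L_1,L_2)$ is not regular.
   Context: $\Sigma$ is a finite alphabet with at least two letters with an involution $a\mapsto\bar a$ ($\bar{\bar a}=a$), extended to words by $\overline{a_1\cdots a_m}=\bar a_m\cdots\bar a_1$ and to languages elementwise. $\kappa$ is a fixed positive integer. $\mathcal{H}_\kappa(L_1,L_2)=\{\gamma\alpha\beta\bar\alpha\bar\gamma:|\alpha|\ge\kappa,\ \gamma\alpha\beta\bar\alpha\in L_1\text{ or }\alpha\beta\bar\alpha\bar\gamma\in L_2\}$. $L_1,L_2$ are regular; $\mathcal{A}_1=(Q_1,\Sigma,E_1,\{q_{01}\},F_1)$ is a complete DFA accepting $L_1$, $\mathcal{A}_2=(Q_2,\Sigma,E_2,\{q_{02}\},F_2)$ a complete DFA accepting $\overline{L_2}$; $p\cdot w$ is the state reached from $p$ on $w$. Construction of $\mathcal{A}$: $Q_{12}=\{(q_{01}\cdot w,q_{02}\cdot w):w\in\Sigma^*\}$ with $(p_1,p_2)\cdot w=(p_1\cdot w,p_2\cdot w)$. For $(p_1,p_2,q_1,q_2)\in Q_1\times Q_2\times Q_1\times Q_2$ let $B(p_1,p_2,q_1,q_2)=\{w:p_1\cdot w=q_1,\ p_2\cdot\bar w=q_2\}$; the quadruple is a basic bridge if this set is nonempty. States of $\mathcal{A}$ are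 all $((p_1,p_2),q_1,q_2,\ell)$ with $(p_1,p_2)\in Q_{12}$, $q_i\in Q_i$, $\ell\in\{0,\dots,\kappa\}$, $(p_1,p_2,q_1,q_2)$ a basic bridge. For $a\in\Sigma$, $P\in Q_{12}$, $q_i\in Q_i$, there is an $a$-arc from $(P,q_1\cdot\bar a,q_2\cdot\bar a,\ell)$ to $(P\cdot a,q_1,q_2,\ell')$, provided both are states, exactly when: $\ell=\ell'=0$ and $q_1\cdot\bar a\notin F_1$, $q_2\cdot\bar a\notin F_2$; or $\ell=0,\ell'=1$ and ($q_1\cdot\bar a\in F_1$ or $q_2\cdot\bar a\in F_2$); or $1\le\ell<\kappa$ and $\ell'=\ell+1$. Initial states: $((q_{01},q_{02}),q_1',q_2',0)$; final states: those with $\ell=\kappa$. Finally, $\mathcal{A}$ is trimmed: states not reachable from an initial state, or from which no final state is reachable, are removed. *)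

theory Defs
  imports Main
begin

definition bar_word :: "('a \<Rightarrow> 'a) \<Rightarrow> 'a list \<Rightarrow> 'a list" where
  "bar_word bar w = rev (map bar w)"

definition bar_lang :: "('a \<Rightarrow> 'a) \<Rightarrow> 'a list set \<Rightarrow> 'a list set" where
  "bar_lang bar L = bar_word bar ` L"

definition hairpin :: "('a \<Rightarrow> 'a) \<Rightarrow> nat \<Rightarrow> 'a list set \<Rightarrow> 'a list set \<Rightarrow> 'a list set" where
  "hairpin bar \<kappa> L1 L2 =
     {\<gamma> @ \<alpha> @ \<beta> @ bar_word bar \<alpha> @ bar_word bar \<gamma> | \<gamma> \<alpha> \<beta>.
        length \<alpha> \<ge> \<kappa> \<and>
        (\<gamma> @ \<alpha> @ \<beta> @ bar_word bar \<alpha> \<in> L1 \<or> \<alpha> @ \<beta> @ bar_word bar \<alpha> @ bar_word bar \<gamma> \<in> L2)}"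

definition complete_dfa :: "'s set \<Rightarrow> ('s \<Rightarrow> 'a \<Rightarrow> 's) \<Rightarrow> 's \<Rightarrow> 's set \<Rightarrow> bool" where
  "complete_dfa Q \<delta> q0 F \<longleftrightarrow> finite Q \<and> q0 \<in> Q \<and> F \<subseteq> Q \<and> (\<forall>q\<in>Q. \<forall>a. \<delta> q a \<in> Q)"

definition dstep :: "('s \<Rightarrow> 'a \<Rightarrow> 's) \<Rightarrow> 's \<Rightarrow> 'a list \<Rightarrow> 's" where
  "dstep \<delta> p w = foldl \<delta> p w"

definition dfa_lang :: "('s \<Rightarrow> 'a \<Rightarrow> 's) \<Rightarrow> 's \<Rightarrow> 's set \<Rightarrow> 'a list set" where
  "dfa_lang \<delta> q0 F = {w. dstep \<delta> q0 w \<in> F}"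

definition regular :: "'a list set \<Rightarrow> bool" where
  "regular L \<longleftrightarrow> (\<exists>(Q::nat set) \<delta> q0 F. complete_dfa Q \<delta> q0 F \<and> dfa_lang \<delta> q0 F = L)"

fun nfa_path :: "('q \<Rightarrow> 'a \<Rightarrow> 'q \<Rightarrow> bool) \<Rightarrow> 'q \<Rightarrow> 'a list \<Rightarrow> 'q \<Rightarrow> bool" where
  "nfa_path \<delta> p [] q = (p = q)"
| "nfa_path \<delta> p (a # w) q = (\<exists>r. \<delta> p a r \<and> nfa_path \<delta> r w q)"

definition restr :: "'q set \<Rightarrow> ('q \<Rightarrow> 'a \<Rightarrow> 'q \<Rightarrow> bool) \<Rightarrow> 'q \<Rightarrow> 'a \<Rightarrow> 'q \<Rightarrow> bool" where
  "restr S \<delta> p a r \<longleftrightarrow> p \<in> S \<and> r \<in> S \<and> \<delta> p a r"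

definition nfa_lang :: "'q set \<Rightarrow> ('q \<Rightarrow> 'a \<Rightarrow> 'q \<Rightarrow> bool) \<Rightarrow> 'q set \<Rightarrow> 'q set \<Rightarrow> 'a list set" where
  "nfa_lang S \<delta> I F = {w. \<exists>p \<in> I \<inter> S. \<exists>q \<in> F \<inter> S. nfa_path (restr S \<delta>) p w q}"

definition trim_states :: "'q set \<Rightarrow> ('q \<Rightarrow> 'a \<Rightarrow> 'q \<Rightarrow> bool) \<Rightarrow> 'q set \<Rightarrow> 'q set \<Rightarrow> 'q set" where
  "trim_states S \<delta> I F =
     {s \<in> S. (\<exists>p \<in> I \<inter> S. \<exists>w. nfa_path (restr S \<delta>) p w s) \<and>
             (\<exists>q \<in> F \<inter> S. \<exists>w. nfa_path (restr S \<delta>) s w q)}"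

definition Q12 :: "('s1 \<Rightarrow> 'a \<Rightarrow> 's1) \<Rightarrow> 's1 \<Rightarrow> ('s2 \<Rightarrow> 'a \<Rightarrow> 's2) \<Rightarrow> 's2 \<Rightarrow> ('s1 \<times> 's2) set" where
  "Q12 \<delta>1 q01 \<delta>2 q02 = {(dstep \<delta>1 q01 w, dstep \<delta>2 q02 w) | w. True}"

definition basic_bridge :: "('a \<Rightarrow> 'a) \<Rightarrow> ('s1 \<Rightarrow> 'a \<Rightarrow> 's1) \<Rightarrow> ('s2 \<Rightarrow> 'a \<Rightarrow> 's2)
    \<Rightarrow> 's1 \<Rightarrow> 's2 \<Rightarrow> 's1 \<Rightarrow> 's2 \<Rightarrow> bool" where
  "basic_bridge bar \<delta>1 \<delta>2 p1 p2 q1 q2 \<longleftrightarrow>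
     (\<exists>w. dstep \<delta>1 p1 w = q1 \<and> dstep \<delta>2 p2 (bar_word bar w) = q2)"

type_synonym ('s1, 's2) astate = "('s1 \<times> 's2) \<times> 's1 \<times> 's2 \<times> nat"

definition A_states :: "('a \<Rightarrow> 'a) \<Rightarrow> nat \<Rightarrow> 's1 set \<Rightarrow> ('s1 \<Rightarrow> 'a \<Rightarrow> 's1) \<Rightarrow> 's1
    \<Rightarrow> 's2 set \<Rightarrow> ('s2 \<Rightarrow> 'a \<Rightarrow> 's2) \<Rightarrow> 's2 \<Rightarrow> ('s1, 's2) astate set" where
  "A_states bar \<kappa> Q1 \<delta>1 q01 Q2 \<delta>2 q02 =
     {((p1, p2), q1, q2, l) | p1 p2 q1 q2 l.
        (p1, p2) \<in> Q12 \<delta>1 q01 \<delta>2 q02 \<and> q1 \<in> Q1 \<and> q2 \<in> Q2 \<and> l \<le> \<kappa> \<and>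
        basic_bridge bar \<delta>1 \<delta>2 p1 p2 q1 q2}"

definition A_trans :: "('a \<Rightarrow> 'a) \<Rightarrow> nat \<Rightarrow> 's1 set \<Rightarrow> ('s1 \<Rightarrow> 'a \<Rightarrow> 's1) \<Rightarrow> 's1 \<Rightarrow> 's1 set
    \<Rightarrow> 's2 set \<Rightarrow> ('s2 \<Rightarrow> 'a \<Rightarrow> 's2) \<Rightarrow> 's2 \<Rightarrow> 's2 set
    \<Rightarrow> ('s1, 's2) astate \<Rightarrow> 'a \<Rightarrow> ('s1, 's2) astate \<Rightarrow> bool" where
  "A_trans bar \<kappa> Q1 \<delta>1 q01 F1 Q2 \<delta>2 q02 F2 s a t \<longleftrightarrow>
     s \<in> A_states bar \<kappa> Q1 \<delta>1 q01 Q2 \<delta>2 q02 \<and> t \<in> A_states bar \<kappa> Q1 \<delta>1 q01 Q2 \<delta>2 q02 \<and>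
     (\<exists>p1 p2 q1 q2 l l'. q1 \<in> Q1 \<and> q2 \<in> Q2 \<and>
        s = ((p1, p2), \<delta>1 q1 (bar a), \<delta>2 q2 (bar a), l) \<and>
        t = ((\<delta>1 p1 a, \<delta>2 p2 a), q1, q2, l') \<and>
        ((l = 0 \<and> l' = 0 \<and> \<delta>1 q1 (bar a) \<notin> F1 \<and> \<delta>2 q2 (bar a) \<notin> F2) \<or>
         (l = 0 \<and> l' = 1 \<and> (\<delta>1 q1 (bar a) \<in> F1 \<or> \<delta>2 q2 (bar a) \<in> F2)) \<or>
         (1 \<le> l \<and> l < \<kappa> \<and> l' = l + 1)))"

definition A_init :: "('a \<Rightarrow> 'a) \<Rightarrow> nat \<Rightarrow> 's1 set \<Rightarrow> ('s1 \<Rightarrow> 'a \<Rightarrow> 's1) \<Rightarrow> 's1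
    \<Rightarrow> 's2 set \<Rightarrow> ('s2 \<Rightarrow> 'a \<Rightarrow> 's2) \<Rightarrow> 's2 \<Rightarrow> ('s1, 's2) astate set" where
  "A_init bar \<kappa> Q1 \<delta>1 q01 Q2 \<delta>2 q02 =
     {s \<in> A_states bar \<kappa> Q1 \<delta>1 q01 Q2 \<delta>2 q02. \<exists>q1 q2. s = ((q01, q02), q1, q2, 0)}"

definition A_final :: "('a \<Rightarrow> 'a) \<Rightarrow> nat \<Rightarrow> 's1 set \<Rightarrow> ('s1 \<Rightarrow> 'a \<Rightarrow> 's1) \<Rightarrow> 's1
    \<Rightarrow> 's2 set \<Rightarrow> ('s2 \<Rightarrow> 'a \<Rightarrow> 's2) \<Rightarrow> 's2 \<Rightarrow> ('s1, 's2) astate set" where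
  "A_final bar \<kappa> Q1 \<delta>1 q01 Q2 \<delta>2 q02 =
     {s \<in> A_states bar \<kappa> Q1 \<delta>1 q01 Q2 \<delta>2 q02. snd (snd (snd s)) = \<kappa>}"

definition A_lang :: "('a \<Rightarrow> 'a) \<Rightarrow> nat \<Rightarrow> 's1 set \<Rightarrow> ('s1 \<Rightarrow> 'a \<Rightarrow> 's1) \<Rightarrow> 's1 \<Rightarrow> 's1 set
    \<Rightarrow> 's2 set \<Rightarrow> ('s2 \<Rightarrow> 'a \<Rightarrow> 's2) \<Rightarrow> 's2 \<Rightarrow> 's2 set \<Rightarrow> 'a list set" where
  "A_lang bar \<kappa> Q1 \<delta>1 q01 F1 Q2 \<delta>2 q02 F2 =
     (let S = A_states bar \<kappa> Q1 \<delta>1 q01 Q2 \<delta>2 q02;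
          T = A_trans bar \<kappa> Q1 \<delta>1 q01 F1 Q2 \<delta>2 q02 F2;
          I = A_init bar \<kappa> Q1 \<delta>1 q01 Q2 \<delta>2 q02;
          F = A_final bar \<kappa> Q1 \<delta>1 q01 Q2 \<delta>2 q02
      in nfa_lang (trim_states S T I F) T I F)"

end

theory Submission
  imports Defs
begin


lemma dstep_Nil[simp]: "dstep \<delta> p [] = p" by (simp add: dstep_def)
lemma dstep_Cons[simp]: "dstep \<delta> p (a#w) = dstep \<delta> (\<delta> p a) w" by (simp add: dstep_def)
lemma dstep_append: "dstep \<delta> p (u@v) = dstep \<delta> (dstep \<delta> p u) v" by (simp add: dstep_def)
lemma dstep_snoc: "dstep \<delta> p (u@[a]) = \<delta> (dstep \<delta> p u) a" by (simp add: dstep_def)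

lemma dstep_in: "complete_dfa Q \<delta> q0 F \<Longrightarrow> p \<in> Q \<Longrightarrow> dstep \<delta> p w \<in> Q"
  by (induction w arbitrary: p) (auto simp: complete_dfa_def)

lemma regular_of_dfa:
  fixes Q :: "'s set"
  assumes "complete_dfa Q \<delta> q0 F"
  shows "regular (dfa_lang \<delta> q0 F)"
proof -
  have fin: "finite Q" using assms by (simp add: complete_dfa_def)
  obtain e :: "'s \<Rightarrow> nat" and n where e: "e ` Q = {i. i < n}" "inj_on e Q"
    using finite_imp_inj_to_nat_seg[OF fin] by blast
  define \<delta>' where "\<delta>' m a = e (\<delta> (inv_into Q e m) a)" for m a
  have step: "dstep \<delta>' (e q) w = e (dstep \<delta> q w)" if "q \<in> Q" for q w
    using that
  proof (induction w arbitrary: q)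
    case Nil then show ?case by simp
  next
    case (Cons a w)
    have "\<delta> q a \<in> Q" using assms Cons.prems by (simp add: complete_dfa_def)
    then show ?case using Cons by (simp add: \<delta>'_def inv_into_f_f[OF e(2)])
  qed
  have q0: "q0 \<in> Q" and FQ: "F \<subseteq> Q" using assms by (auto simp: complete_dfa_def)
  have "complete_dfa (e ` Q) \<delta>' (e q0) (e ` F)"
    using assms fin q0 FQ unfolding complete_dfa_def
    by (auto simp: \<delta>'_def inv_into_into[of _ e Q] inv_into_f_f[OF e(2)])
  moreover have "dfa_lang \<delta>' (e q0) (e ` F) = dfa_lang \<delta> q0 F"
  proof -
    have "dstep \<delta> q0 w \<in> F \<longleftrightarrow> e (dstep \<delta> q0 w) \<in> e ` F" for w
      using dstep_in[OF assms q0, of w] FQ e(2) by (auto dest: inj_onD)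
    then show ?thesis by (auto simp: dfa_lang_def step[OF q0])
  qed
  ultimately show ?thesis unfolding regular_def
    using e(1) by (metis (no_types, lifting))
qed



definition sat :: "'a list set \<Rightarrow> ('a list \<Rightarrow> 'b) \<Rightarrow> bool" where
  "sat L f \<longleftrightarrow> finite (range f) \<and> (\<forall>u u' w. f u = f u' \<longrightarrow> (u@w \<in> L \<longleftrightarrow> u'@w \<in> L))"

lemma satD: "sat L f \<Longrightarrow> f u = f u' \<Longrightarrow> u@w \<in> L \<longleftrightarrow> u'@w \<in> L"
  unfolding sat_def by blast

lemma regular_sat:
  fixes f :: "'a list \<Rightarrow> 'b"
  assumes "sat L f" shows "regular L"
proof -
  define qt where "qt u = {w. u@w \<in> L}" for u
  have qt_eq: "qt u = qt (SOME u'. f u' = f u)" for u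
  proof -
    have "f (SOME u'. f u' = f u) = f u" by (rule someI) simp
    then show ?thesis using satD[OF assms, of "SOME u'. f u' = f u" u] unfolding qt_def by auto
  qed
  have "range qt \<subseteq> (\<lambda>c. qt (SOME u'. f u' = c)) ` range f"
  proof
    fix S assume "S \<in> range qt"
    then obtain u where "S = qt u" by blast
    then show "S \<in> (\<lambda>c. qt (SOME u'. f u' = c)) ` range f" using qt_eq[of u] by blast
  qed
  moreover have "finite (range f)" using assms unfolding sat_def by simp
  ultimately have fin: "finite (range qt)"
    by (meson finite_imageI finite_subset)
  define \<delta> where "\<delta> S a = {w. a#w \<in> S}" for S :: "'a list set" and a
  have d: "\<delta> (qt u) a = qt (u@[a])" for u a by (simp add: \<delta>_def qt_def)
  have ds: "dstep \<delta> (qt u) w = qt (u@w)" for u w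
    by (induction w arbitrary: u) (simp_all add: d)
  have "complete_dfa (range qt) \<delta> (qt []) {S \<in> range qt. [] \<in> S}"
    using fin by (auto simp: complete_dfa_def d)
  from regular_of_dfa[OF this]
  have "regular (dfa_lang \<delta> (qt []) {S \<in> range qt. [] \<in> S})" .
  moreover have "dfa_lang \<delta> (qt []) {S \<in> range qt. [] \<in> S} = L"
  proof -
    have "w \<in> dfa_lang \<delta> (qt []) {S \<in> range qt. [] \<in> S} \<longleftrightarrow> w \<in> L" for w
      using ds[of "[]" w] unfolding dfa_lang_def by (simp add: qt_def)
    then show ?thesis by blast
  qed
  ultimately show ?thesis by simp
qed

lemma sat_of_regular:
  assumes "regular L" shows "\<exists>f :: 'a list \<Rightarrow> nat. sat L f"
proof -
  obtain Q :: "nat set" and \<delta> q0 F where d: "complete_dfa Q \<delta> q0 F" "dfa_lang \<delta> q0 F = L"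
    using assms unfolding regular_def by blast
  have q0: "q0 \<in> Q" using d(1) by (simp add: complete_dfa_def)
  have "range (dstep \<delta> q0) \<subseteq> Q" using dstep_in[OF d(1) q0] by blast
  then have "finite (range (dstep \<delta> q0))" using d(1) finite_subset by (auto simp: complete_dfa_def)
  then have "sat L (dstep \<delta> q0)"
    using d(2) by (auto simp: sat_def dfa_lang_def dstep_append)
  then show ?thesis by blast
qed




lemma sat_pair: "sat A f \<Longrightarrow> sat B g \<Longrightarrow> (\<And>u w. u@w \<in> C \<longleftrightarrow> P (u@w \<in> A) (u@w \<in> B)) \<Longrightarrow> sat C (\<lambda>u. (f u, g u))"
proof -
  assume a: "sat A f" "sat B g" and c: "\<And>u w. u@w \<in> C \<longleftrightarrow> P (u@w \<in> A) (u@w \<in> B)"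
  have "range (\<lambda>u. (f u, g u)) \<subseteq> range f \<times> range g" by auto
  moreover have "finite (range f \<times> range g)" using a by (simp add: sat_def)
  ultimately have "finite (range (\<lambda>u. (f u, g u)))" by (rule finite_subset)
  moreover have "u@w \<in> C \<longleftrightarrow> u'@w \<in> C" if "(f u, g u) = (f u', g u')" for u u' w
    using that satD[OF a(1), of u u' w] satD[OF a(2), of u u' w] c[of u w] c[of u' w] by simp
  ultimately show ?thesis unfolding sat_def by blast
qed

lemma regular_Int: "regular A \<Longrightarrow> regular B \<Longrightarrow> regular (A \<inter> B)"
proof -
  assume "regular A" "regular B"
  then obtain f g :: "'a list \<Rightarrow> nat" where "sat A f" "sat B g" using sat_of_regular by blast
  then have "sat (A \<inter> B) (\<lambda>u. (f u, g u))" by (rule sat_pair[where P = "(\<and>)"]) simp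
  then show ?thesis by (rule regular_sat)
qed

lemma regular_Un: "regular A \<Longrightarrow> regular B \<Longrightarrow> regular (A \<union> B)"
proof -
  assume "regular A" "regular B"
  then obtain f g :: "'a list \<Rightarrow> nat" where "sat A f" "sat B g" using sat_of_regular by blast
  then have "sat (A \<union> B) (\<lambda>u. (f u, g u))" by (rule sat_pair[where P = "(\<or>)"]) simp
  then show ?thesis by (rule regular_sat)
qed

lemma regular_empty: "regular {}"
  by (rule regular_sat[of _ "\<lambda>_. ()"]) (simp add: sat_def)

lemma regular_UNIV: "regular UNIV"
  by (rule regular_sat[of _ "\<lambda>_. ()"]) (simp add: sat_def)

lemma regular_UNION: "finite M \<Longrightarrow> (\<And>x. x \<in> M \<Longrightarrow> regular (G x)) \<Longrightarrow> regular (\<Union>x\<in>M. G x)"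
proof (induction M rule: finite_induct)
  case empty then show ?case by (simp add: regular_empty)
next
  case (insert x F)
  then show ?case using regular_Un[of "G x" "\<Union>x\<in>F. G x"] by simp
qed


lemma regular_rev: "regular L \<Longrightarrow> regular (rev ` L)"
proof -
  assume "regular L"
  then obtain Q :: "nat set" and \<delta> q0 F where d: "complete_dfa Q \<delta> q0 F" "dfa_lang \<delta> q0 F = L"
    unfolding regular_def by blast
  have q0: "q0 \<in> Q" using d(1) by (simp add: complete_dfa_def)
  define f where "f u = {q \<in> Q. dstep \<delta> q (rev u) \<in> F}" for u
  have mem: "x \<in> rev ` L \<longleftrightarrow> rev x \<in> L" for x by (metis image_iff rev_rev_ident)
  have "range f \<subseteq> Pow Q" by (auto simp: f_def)
  then have "finite (range f)" using d(1) by (auto simp: complete_dfa_def intro: finite_subset)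
  moreover have "u@w \<in> rev ` L \<longleftrightarrow> dstep \<delta> q0 (rev w) \<in> f u" for u w
    using dstep_in[OF d(1) q0] d(2) by (auto simp: mem f_def dfa_lang_def dstep_append)
  ultimately have "sat (rev ` L) f" unfolding sat_def by auto
  then show ?thesis by (rule regular_sat)
qed

lemma regular_map:
  assumes "regular L" and inv: "\<And>a. g (g a) = a"
  shows "regular (map g ` L)"
proof -
  obtain Q :: "nat set" and \<delta> q0 F where d: "complete_dfa Q \<delta> q0 F" "dfa_lang \<delta> q0 F = L"
    using assms unfolding regular_def by blast
  have q0: "q0 \<in> Q" using d(1) by (simp add: complete_dfa_def)
  have mm: "map g (map g x) = x" for x by (induction x) (simp_all add: inv)
  have mem: "x \<in> map g ` L \<longleftrightarrow> map g x \<in> L" for x by (metis image_iff mm)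
  have "range (\<lambda>u. dstep \<delta> q0 (map g u)) \<subseteq> Q" using dstep_in[OF d(1) q0] by auto
  then have "finite (range (\<lambda>u. dstep \<delta> q0 (map g u)))"
    using d(1) by (auto simp: complete_dfa_def intro: finite_subset)
  then have "sat (map g ` L) (\<lambda>u. dstep \<delta> q0 (map g u))"
    using d(2) by (auto simp: sat_def mem dfa_lang_def dstep_append)
  then show ?thesis by (rule regular_sat)
qed

lemma finite_len_le: "finite {xs :: ('a::finite) list. length xs \<le> n}"
  using finite_lists_length_le[of "UNIV :: 'a set" n] by simp

lemma regular_drop:
  fixes K :: "('a::finite) list set"
  assumes "regular K" shows "regular {W. drop n W \<in> K}"
proof -
  obtain g :: "'a list \<Rightarrow> nat" where g: "sat K g" using sat_of_regular[OF assms] by blast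
  define f where "f u = (take n u, min (length u) n, g (drop n u))" for u
  have sub: "range f \<subseteq> {xs. length xs \<le> n} \<times> {..n} \<times> range g" by (auto simp: f_def)
  have "finite (range g)" using g unfolding sat_def by blast
  then have "finite ({xs::'a list. length xs \<le> n} \<times> {..n} \<times> range g)"
    using finite_len_le[of n] by (intro finite_cartesian_product) auto
  then have "finite (range f)" using sub by (rule finite_subset[rotated])
  moreover have "u@w \<in> {W. drop n W \<in> K} \<longleftrightarrow> u'@w \<in> {W. drop n W \<in> K}" if "f u = f u'" for u u' w
  proof (cases "length u < n")
    case True
    then have "u = u'" using that by (auto simp: f_def min_def split: if_splits)
    then show ?thesis by simp
  next
    case False
    then have "length u' \<ge> n" using that by (auto simp: f_def min_def split: if_splits)
    then show ?thesis using False that satD[OF g, of "drop n u" "drop n u'" w]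
      by (simp add: f_def)
  qed
  ultimately have "sat {W. drop n W \<in> K} f" unfolding sat_def by blast
  then show ?thesis by (rule regular_sat)
qed

lemma regular_prefix:
  fixes x :: "('a::finite) list"
  shows "regular {W. take (length x) W = x}"
proof -
  define n where "n = length x"
  define f where "f u = (take n u, min (length u) n)" for u :: "'a list"
  have "range f \<subseteq> {xs. length xs \<le> n} \<times> {..n}" by (auto simp: f_def)
  then have "finite (range f)" using finite_len_le[of n] by (auto intro: finite_subset)
  moreover have "u@w \<in> {W. take n W = x} \<longleftrightarrow> u'@w \<in> {W. take n W = x}" if "f u = f u'" for u u' w
  proof (cases "length u < n")
    case True
    then have "u = u'" using that by (auto simp: f_def min_def split: if_splits)
    then show ?thesis by simp
  next
    case False
    then have "length u' \<ge> n" using that by (auto simp: f_def min_def split: if_splits)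
    then show ?thesis using False that by (simp add: f_def)
  qed
  ultimately have "sat {W. take n W = x} f" unfolding sat_def by blast
  then show ?thesis unfolding n_def by (rule regular_sat)
qed

lemma regular_len: "regular {W. n \<le> length W}"
proof -
  have "range (\<lambda>u::'a list. min (length u) n) \<subseteq> {..n}" by auto
  then have "finite (range (\<lambda>u::'a list. min (length u) n))" by (rule finite_subset) simp
  moreover have "u@w \<in> {W. n \<le> length W} \<longleftrightarrow> u'@w \<in> {W. n \<le> length W}"
    if "min (length u) n = min (length u') n" for u u' w :: "'a list"
    using that by (simp add: min_def split: if_splits)
  ultimately have "sat {W. n \<le> length W} (\<lambda>u::'a list. min (length u) n)" unfolding sat_def by blast
  then show ?thesis by (rule regular_sat)
qed



locale hp =
  fixes bar :: "'a::finite \<Rightarrow> 'a" and \<kappa> :: nat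
    and Q1 :: "'s1 set" and \<delta>1 :: "'s1 \<Rightarrow> 'a \<Rightarrow> 's1" and q01 :: 's1 and F1 :: "'s1 set"
    and Q2 :: "'s2 set" and \<delta>2 :: "'s2 \<Rightarrow> 'a \<Rightarrow> 's2" and q02 :: 's2 and F2 :: "'s2 set"
  assumes inv: "\<And>a. bar (bar a) = a" and kpos: "\<kappa> > 0"
    and d1: "complete_dfa Q1 \<delta>1 q01 F1" and d2: "complete_dfa Q2 \<delta>2 q02 F2"
begin

abbreviation b :: "'a list \<Rightarrow> 'a list" where "b \<equiv> bar_word bar"

lemma b_Nil[simp]: "b [] = []" by (simp add: bar_word_def)
lemma b_Cons: "b (a#w) = b w @ [bar a]" by (simp add: bar_word_def)
lemma b_append[simp]: "b (u@v) = b v @ b u" by (simp add: bar_word_def)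
lemma b_b[simp]: "b (b w) = w" by (induction w) (simp_all add: bar_word_def inv)
lemma length_b[simp]: "length (b w) = length w" by (simp add: bar_word_def)
lemma b_inj: "b u = b v \<longleftrightarrow> u = v" by (metis b_b)
lemma mem_b_image: "w \<in> b ` L \<longleftrightarrow> b w \<in> L" by (metis b_b image_iff)
lemma mem_bar_lang: "w \<in> bar_lang bar L \<longleftrightarrow> b w \<in> L" by (simp add: bar_lang_def mem_b_image)
lemma b_image_eq: "b ` L = rev ` (map bar ` L)" by (auto simp: bar_word_def image_image)
lemma regular_b: "regular L \<Longrightarrow> regular (b ` L)"
  unfolding b_image_eq by (intro regular_rev regular_map) (simp_all add: inv)

abbreviation D1 where "D1 \<equiv> dstep \<delta>1 q01"
abbreviation D2 where "D2 \<equiv> dstep \<delta>2 q02"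

definition M :: "'a list \<Rightarrow> nat \<Rightarrow> bool" where
  "M W j \<longleftrightarrow> D1 (take (length W - j) W) \<in> F1 \<or> D2 (take (length W - j) (b W)) \<in> F2"

definition dec :: "'a list \<Rightarrow> nat \<Rightarrow> bool" where
  "dec W j \<longleftrightarrow> (\<exists>y \<beta>. length y = j + \<kappa> \<and> W = y @ \<beta> @ b y)"

definition Good :: "'a list \<Rightarrow> 'a list \<Rightarrow> bool" where
  "Good x \<beta> \<longleftrightarrow> \<kappa> \<le> length x \<and> M (x @ \<beta> @ b x) (length x - \<kappa>) \<and>
     (\<forall>j < length x - \<kappa>. \<not> M (x @ \<beta> @ b x) j)"

lemma take_dec:
  assumes "j \<le> length y"
  shows "take (length (y @ \<beta> @ b y) - j) (y @ \<beta> @ b y) = y @ \<beta> @ b (drop j y)"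
proof -
  have "b y = b (drop j y) @ b (take j y)" by (metis append_take_drop_id b_append)
  moreover have "length (b (take j y)) = j" using assms by simp
  ultimately show ?thesis by simp
qed

lemma b_dec: "b (y @ \<beta> @ b y) = y @ b \<beta> @ b y" by simp

lemma M_dec:
  assumes "j \<le> length y"
  shows "M (y @ \<beta> @ b y) j \<longleftrightarrow>
    D1 (y @ \<beta> @ b (drop j y)) \<in> F1 \<or> D2 (y @ b \<beta> @ b (drop j y)) \<in> F2"
proof -
  have "take (length (y @ \<beta> @ b y) - j) (b (y @ \<beta> @ b y)) = y @ b \<beta> @ b (drop j y)"
    using take_dec[OF assms, of "b \<beta>"] by simp
  then show ?thesis unfolding M_def using take_dec[OF assms, of \<beta>] by simp
qed

lemma shrink:
  assumes "k \<le> length y"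
  shows "y @ \<beta> @ b y = take k y @ (drop k y @ \<beta> @ b (drop k y)) @ b (take k y)"
  by (metis append.assoc append_take_drop_id b_append)

lemma dec_mono: "dec W j \<Longrightarrow> j' \<le> j \<Longrightarrow> dec W j'"
proof -
  assume "dec W j" "j' \<le> j"
  then obtain y \<beta> where y: "length y = j + \<kappa>" "W = y @ \<beta> @ b y" unfolding dec_def by blast
  have "j' + \<kappa> \<le> length y" using y(1) \<open>j' \<le> j\<close> by simp
  then show ?thesis unfolding dec_def using y(2) shrink[of "j' + \<kappa>" y \<beta>]
    by (metis length_take min.absorb2)
qed

lemma dec_len: "dec W j \<Longrightarrow> 2 * (j + \<kappa>) \<le> length W"
  unfolding dec_def by auto

abbreviation L1 where "L1 \<equiv> dfa_lang \<delta>1 q01 F1"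
abbreviation L2 where "L2 \<equiv> bar_lang bar (dfa_lang \<delta>2 q02 F2)"

lemma H_char: "hairpin bar \<kappa> L1 L2 = {W. \<exists>j. dec W j \<and> M W j}"
proof (intro set_eqI iffI)
  fix W assume "W \<in> hairpin bar \<kappa> L1 L2"
  then obtain \<gamma> \<alpha> \<beta> where W: "W = \<gamma> @ \<alpha> @ \<beta> @ b \<alpha> @ b \<gamma>" and a: "length \<alpha> \<ge> \<kappa>"
    and c: "\<gamma> @ \<alpha> @ \<beta> @ b \<alpha> \<in> L1 \<or> \<alpha> @ \<beta> @ b \<alpha> @ b \<gamma> \<in> L2"
    unfolding hairpin_def by blast
  define y where "y = \<gamma> @ \<alpha>"
  have W': "W = y @ \<beta> @ b y" by (simp add: W y_def)
  have jle: "length \<gamma> \<le> length y" by (simp add: y_def)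
  have dy: "drop (length \<gamma>) y = \<alpha>" by (simp add: y_def)
  have "dec W (length \<gamma>)"
    unfolding dec_def W' using shrink[of "length \<gamma> + \<kappa>" y \<beta>] a
    by (metis add_le_cancel_left length_append length_take min.absorb2 y_def)
  moreover have "M W (length \<gamma>)"
    unfolding W' M_dec[OF jle] dy
    using c by (auto simp: dfa_lang_def mem_bar_lang y_def)
  ultimately show "W \<in> {W. \<exists>j. dec W j \<and> M W j}" by blast
next
  fix W assume "W \<in> {W. \<exists>j. dec W j \<and> M W j}"
  then obtain j y \<beta> where y: "length y = j + \<kappa>" "W = y @ \<beta> @ b y" and m: "M W j"
    unfolding dec_def by blast
  define \<gamma> where "\<gamma> = take j y"
  define \<alpha> where "\<alpha> = drop j y"
  have jle: "j \<le> length y" using y by simp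
  have W: "W = \<gamma> @ \<alpha> @ \<beta> @ b \<alpha> @ b \<gamma>" using y(2) by (simp add: \<gamma>_def \<alpha>_def flip: b_append)
  have a: "length \<alpha> \<ge> \<kappa>" using y(1) by (simp add: \<alpha>_def)
  have yy: "y = \<gamma> @ \<alpha>" by (simp add: \<gamma>_def \<alpha>_def)
  from m have "D1 (y @ \<beta> @ b \<alpha>) \<in> F1 \<or> D2 (y @ b \<beta> @ b \<alpha>) \<in> F2"
    unfolding y(2) M_dec[OF jle] \<alpha>_def .
  then have "\<gamma> @ \<alpha> @ \<beta> @ b \<alpha> \<in> L1 \<or> \<alpha> @ \<beta> @ b \<alpha> @ b \<gamma> \<in> L2"
    by (auto simp: dfa_lang_def mem_bar_lang yy)
  then show "W \<in> hairpin bar \<kappa> L1 L2" unfolding hairpin_def using W a by blast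
qed

end


context hp begin

definition E :: "'a list \<Rightarrow> 'a list set" where
  "E x = {W. \<exists>\<beta>. W = x @ \<beta> @ b x}"

lemma E_eq: "E x = {W. take (length x) W = x} \<inter> {W. 2 * length x \<le> length W}
    \<inter> rev ` {V. take (length (rev (b x))) V = rev (b x)}"
proof (intro set_eqI iffI)
  fix W assume "W \<in> E x"
  then obtain \<beta> where W: "W = x @ \<beta> @ b x" unfolding E_def by blast
  have "take (length x) (rev W) = rev (b x)" unfolding W by simp
  then show "W \<in> {W. take (length x) W = x} \<inter> {W. 2 * length x \<le> length W}
    \<inter> rev ` {V. take (length (rev (b x))) V = rev (b x)}"
    using W by (auto simp: image_iff intro!: exI[of _ "rev W"])
next
  fix W assume "W \<in> {W. take (length x) W = x} \<inter> {W. 2 * length x \<le> length W}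
    \<inter> rev ` {V. take (length (rev (b x))) V = rev (b x)}"
  then have t: "take (length x) W = x" and l: "2 * length x \<le> length W"
    and r: "take (length x) (rev W) = rev (b x)" by auto
  have d: "drop (length W - length x) W = b x" using r by (simp add: take_rev)
  define \<beta> where "\<beta> = take (length W - length x - length x) (drop (length x) W)"
  have "take (length W - length x) W = x @ \<beta>"
  proof -
    have tt: "take (length x) (take (length W - length x) W) = take (length x) W" using l by (simp add: min.absorb1)
    have "take (length W - length x) W = take (length x) W @ drop (length x) (take (length W - length x) W)"
      using append_take_drop_id[of "length x" "take (length W - length x) W"] unfolding tt by simp
    then show ?thesis using t l by (simp add: \<beta>_def drop_take)
  qed
  then have "W = x @ \<beta> @ b x" using d by (metis append.assoc append_take_drop_id)
  then show "W \<in> E x" unfolding E_def by blast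
qed

lemma regular_E: "regular (E x)"
  unfolding E_eq
  by (intro regular_Int regular_prefix regular_len regular_rev)

lemma regular_takeK: "regular (K :: 'a list set) \<Longrightarrow> regular {W. take (length W - j) W \<in> K}"
proof -
  assume K: "regular K"
  have "{W. take (length W - j) W \<in> K} = rev ` {V. drop j V \<in> rev ` K}"
  proof (intro set_eqI)
    fix W
    have "W \<in> rev ` {V. drop j V \<in> rev ` K} \<longleftrightarrow> drop j (rev W) \<in> rev ` K"
      by (metis (no_types, lifting) image_iff mem_Collect_eq rev_rev_ident)
    also have "\<dots> \<longleftrightarrow> take (length W - j) W \<in> K"
      by (metis drop_rev image_iff rev_rev_ident)
    finally show "W \<in> {W. take (length W - j) W \<in> K} \<longleftrightarrow> W \<in> rev ` {V. drop j V \<in> rev ` K}" by simp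
  qed
  moreover have "regular (rev ` K)" by (rule regular_rev[OF K])
  then have "regular {V. drop j V \<in> rev ` K}" by (rule regular_drop)
  ultimately show ?thesis using regular_rev by metis
qed

lemma regular_MM: "regular {W. M W j}"
proof -
  have r1: "regular L1" using regular_of_dfa[OF d1] .
  have r2: "regular (dfa_lang \<delta>2 q02 F2)" using regular_of_dfa[OF d2] .
  have "{W. M W j} = {W. take (length W - j) W \<in> L1} \<union> b ` {W. take (length W - j) W \<in> dfa_lang \<delta>2 q02 F2}"
    by (auto simp: M_def mem_b_image dfa_lang_def)
  then show ?thesis
    using r1 r2 by (simp add: regular_Un regular_takeK regular_b)
qed

lemma H_union:
  "{W. \<exists>j. dec W j \<and> M W j} = (\<Union>x\<in>{x. \<exists>\<beta>. Good x \<beta>}. E x \<inter> {W. M W (length x - \<kappa>)})"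
proof (intro set_eqI iffI)
  fix W assume "W \<in> {W. \<exists>j. dec W j \<and> M W j}"
  then have ex: "\<exists>j. dec W j \<and> M W j" by blast
  define j0 where "j0 = (LEAST j. dec W j \<and> M W j)"
  have j0: "dec W j0 \<and> M W j0" unfolding j0_def using LeastI_ex[OF ex] .
  have less: "\<not> (dec W j \<and> M W j)" if "j < j0" for j
    using not_less_Least[of j "\<lambda>j. dec W j \<and> M W j"] that unfolding j0_def by blast
  obtain y \<beta> where y: "length y = j0 + \<kappa>" "W = y @ \<beta> @ b y" using j0 unfolding dec_def by blast
  have "Good y \<beta>"
    unfolding Good_def using y j0 less dec_mono[of W j0] by auto
  moreover have "W \<in> E y" unfolding E_def using y by blast
  moreover have "M W (length y - \<kappa>)" using y j0 by simp
  ultimately show "W \<in> (\<Union>x\<in>{x. \<exists>\<beta>. Good x \<beta>}. E x \<inter> {W. M W (length x - \<kappa>)})" by blast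
next
  fix W assume "W \<in> (\<Union>x\<in>{x. \<exists>\<beta>. Good x \<beta>}. E x \<inter> {W. M W (length x - \<kappa>)})"
  then obtain x \<beta>0 \<beta> where g: "Good x \<beta>0" and W: "W = x @ \<beta> @ b x" and m: "M W (length x - \<kappa>)"
    unfolding E_def by blast
  have "\<kappa> \<le> length x" using g by (simp add: Good_def)
  then have "dec W (length x - \<kappa>)" unfolding dec_def using W by auto
  then show "W \<in> {W. \<exists>j. dec W j \<and> M W j}" using m by blast
qed

lemma part1:
  assumes "finite {x. \<exists>\<beta>. Good x \<beta>}"
  shows "regular (hairpin bar \<kappa> L1 L2)"
  unfolding H_char H_union
  using assms by (intro regular_UNION regular_Int regular_E regular_MM)

end


lemma nfa_path_append:
  "nfa_path R p (u @ v) q \<longleftrightarrow> (\<exists>r. nfa_path R p u r \<and> nfa_path R r v q)"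
  by (induction u arbitrary: p) auto

lemma nfa_path_restr_mono: "nfa_path (restr S T) p w q \<Longrightarrow> nfa_path T p w q"
  by (induction w arbitrary: p) (auto simp: restr_def)

lemma restr_self: "(\<And>p a r. T p a r \<Longrightarrow> p \<in> S \<and> r \<in> S) \<Longrightarrow> restr S T = T"
  unfolding restr_def by (intro ext) blast

lemma nfa_path_seq:
  "(\<forall>i<length w. R (\<sigma> i) (w ! i) (\<sigma> (Suc i))) \<Longrightarrow> nfa_path R (\<sigma> 0) w (\<sigma> (length w))"
proof (induction w arbitrary: \<sigma>)
  case Nil then show ?case by simp
next
  case (Cons a w)
  have "\<forall>i<length w. R ((\<sigma> \<circ> Suc) i) (w ! i) ((\<sigma> \<circ> Suc) (Suc i))" using Cons.prems by auto
  from Cons.IH[OF this] have "nfa_path R (\<sigma> 1) w (\<sigma> (Suc (length w)))" by simp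
  moreover have "R (\<sigma> 0) a (\<sigma> 1)" using Cons.prems by fastforce
  ultimately show ?case by auto
qed

lemma nfa_path_trim:
  assumes TS: "\<And>p a r. T p a r \<Longrightarrow> p \<in> S \<and> r \<in> S"
  shows "nfa_path T p w q \<Longrightarrow> p \<in> S \<Longrightarrow> q \<in> S \<Longrightarrow>
    (\<exists>p0 \<in> I \<inter> S. \<exists>u. nfa_path T p0 u p) \<Longrightarrow> (\<exists>qf \<in> F \<inter> S. \<exists>v. nfa_path T q v qf) \<Longrightarrow>
    nfa_path (restr (trim_states S T I F) T) p w q"
proof (induction w arbitrary: p)
  case Nil then show ?case by simp
next
  case (Cons a w)
  have rs: "restr S T = T" by (rule restr_self[OF TS])
  from Cons.prems(1) obtain r where r: "T p a r" "nfa_path T r w q" by auto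
  have rS: "r \<in> S" using TS[OF r(1)] by blast
  obtain p0 u where p0: "p0 \<in> I \<inter> S" "nfa_path T p0 u p" using Cons.prems(4) by blast
  obtain qf v where qf: "qf \<in> F \<inter> S" "nfa_path T q v qf" using Cons.prems(5) by blast
  have reach_r: "\<exists>p0 \<in> I \<inter> S. \<exists>u. nfa_path T p0 u r"
    using p0 r(1) by (intro bexI[of _ p0] exI[of _ "u @ [a]"]) (auto simp: nfa_path_append)
  have IH: "nfa_path (restr (trim_states S T I F) T) r w q"
    using Cons.IH[OF r(2) rS Cons.prems(3) reach_r Cons.prems(5)] .
  have "nfa_path T p ((a # w) @ v) qf" unfolding nfa_path_append[of T p "a # w" v qf] using Cons.prems(1) qf(2) by blast
  then have "p \<in> trim_states S T I F"
    unfolding trim_states_def rs using Cons.prems(2) p0 qf by blast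
  moreover have "nfa_path T r (w @ v) qf" unfolding nfa_path_append[of T r w v qf] using r(2) qf(2) by blast
  then have "r \<in> trim_states S T I F"
    unfolding trim_states_def rs using rS reach_r qf by blast
  ultimately have "restr (trim_states S T I F) T p a r" using r(1) by (simp add: restr_def)
  then show ?case using IH by auto
qed



context hp begin

abbreviation SS where "SS \<equiv> A_states bar \<kappa> Q1 \<delta>1 q01 Q2 \<delta>2 q02"
abbreviation TT where "TT \<equiv> A_trans bar \<kappa> Q1 \<delta>1 q01 F1 Q2 \<delta>2 q02 F2"
abbreviation II where "II \<equiv> A_init bar \<kappa> Q1 \<delta>1 q01 Q2 \<delta>2 q02"
abbreviation FF where "FF \<equiv> A_final bar \<kappa> Q1 \<delta>1 q01 Q2 \<delta>2 q02"

lemma TT_S: "TT p a r \<Longrightarrow> p \<in> SS \<and> r \<in> SS"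
  unfolding A_trans_def by blast

definition hh :: "'s1 \<Rightarrow> 's2 \<Rightarrow> 'a list \<Rightarrow> nat \<Rightarrow> bool" where
  "hh f1 f2 w i \<longleftrightarrow> dstep \<delta>1 f1 (b (drop i w)) \<in> F1 \<or> dstep \<delta>2 f2 (b (drop i w)) \<in> F2"

lemma path_sound:
  "nfa_path TT s w t \<Longrightarrow> s = ((p1,p2),r1,r2,l) \<Longrightarrow> t = ((e1,e2),f1,f2,l') \<Longrightarrow>
   e1 = dstep \<delta>1 p1 w \<and> e2 = dstep \<delta>2 p2 w \<and> r1 = dstep \<delta>1 f1 (b w) \<and> r2 = dstep \<delta>2 f2 (b w) \<and>
   (l = 0 \<longrightarrow> (l' = 0 \<and> (\<forall>i<length w. \<not> hh f1 f2 w i)) \<or>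
      (\<exists>k<length w. hh f1 f2 w k \<and> (\<forall>i<k. \<not> hh f1 f2 w i) \<and> l' = length w - k)) \<and>
   (0 < l \<longrightarrow> l' = l + length w)"
proof (induction w arbitrary: s p1 p2 r1 r2 l)
  case Nil then show ?case by simp
next
  case (Cons a w)
  from Cons.prems(1) obtain s' where tr: "TT s a s'" and pth: "nfa_path TT s' w t" by auto
  from tr obtain q1 q2 l0' where
    r1: "r1 = \<delta>1 q1 (bar a)" and r2: "r2 = \<delta>2 q2 (bar a)" and
    s': "s' = ((\<delta>1 p1 a, \<delta>2 p2 a), q1, q2, l0')" and
    lv: "(l = 0 \<and> l0' = 0 \<and> \<delta>1 q1 (bar a) \<notin> F1 \<and> \<delta>2 q2 (bar a) \<notin> F2) \<or>
         (l = 0 \<and> l0' = 1 \<and> (\<delta>1 q1 (bar a) \<in> F1 \<or> \<delta>2 q2 (bar a) \<in> F2)) \<or>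
         (1 \<le> l \<and> l < \<kappa> \<and> l0' = l + 1)"
    unfolding A_trans_def Cons.prems(2) by auto
  note IH = Cons.IH[OF pth s' Cons.prems(3)]
  have e: "e1 = dstep \<delta>1 p1 (a # w)" "e2 = dstep \<delta>2 p2 (a # w)" using IH by simp_all
  have rr1: "r1 = dstep \<delta>1 f1 (b (a # w))" using IH r1 by (simp add: b_Cons dstep_snoc)
  have rr2: "r2 = dstep \<delta>2 f2 (b (a # w))" using IH r2 by (simp add: b_Cons dstep_snoc)
  have hh0: "hh f1 f2 (a # w) 0 \<longleftrightarrow> \<delta>1 q1 (bar a) \<in> F1 \<or> \<delta>2 q2 (bar a) \<in> F2"
    using rr1 rr2 r1 r2 by (simp add: hh_def)
  have hhS: "hh f1 f2 (a # w) (Suc i) \<longleftrightarrow> hh f1 f2 w i" for i by (simp add: hh_def)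
  have lev: "(l = 0 \<longrightarrow> (l' = 0 \<and> (\<forall>i<length (a # w). \<not> hh f1 f2 (a # w) i)) \<or>
      (\<exists>k<length (a # w). hh f1 f2 (a # w) k \<and> (\<forall>i<k. \<not> hh f1 f2 (a # w) i) \<and> l' = length (a # w) - k)) \<and>
   (0 < l \<longrightarrow> l' = l + length (a # w))"
  proof -
    consider (A) "l = 0" "l0' = 0" "\<not> hh f1 f2 (a # w) 0"
      | (B) "l = 0" "l0' = 1" "hh f1 f2 (a # w) 0"
      | (C) "1 \<le> l" "l < \<kappa>" "l0' = l + 1"
      using lv hh0 by blast
    then show ?thesis
    proof cases
      case A
      from IH A(2) have "(l' = 0 \<and> (\<forall>i<length w. \<not> hh f1 f2 w i)) \<or>
        (\<exists>k<length w. hh f1 f2 w k \<and> (\<forall>i<k. \<not> hh f1 f2 w i) \<and> l' = length w - k)" by simp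
      then show ?thesis
      proof
        assume h: "l' = 0 \<and> (\<forall>i<length w. \<not> hh f1 f2 w i)"
        have "\<forall>i<length (a # w). \<not> hh f1 f2 (a # w) i"
        proof (intro allI impI)
          fix i assume "i < length (a # w)"
          then show "\<not> hh f1 f2 (a # w) i" using h A(3) hhS by (cases i) auto
        qed
        then show ?thesis using h A(1) by simp
      next
        assume "\<exists>k<length w. hh f1 f2 w k \<and> (\<forall>i<k. \<not> hh f1 f2 w i) \<and> l' = length w - k"
        then obtain k where k: "k < length w" "hh f1 f2 w k" "\<forall>i<k. \<not> hh f1 f2 w i" "l' = length w - k"
          by blast
        have "\<forall>i<Suc k. \<not> hh f1 f2 (a # w) i"
        proof (intro allI impI)
          fix i assume "i < Suc k"
          then show "\<not> hh f1 f2 (a # w) i" using k(3) A(3) hhS by (cases i) auto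
        qed
        moreover have "hh f1 f2 (a # w) (Suc k)" using k(2) hhS by simp
        ultimately have "\<exists>k<length (a # w). hh f1 f2 (a # w) k \<and> (\<forall>i<k. \<not> hh f1 f2 (a # w) i) \<and> l' = length (a # w) - k"
          using k(1,4) by (intro exI[of _ "Suc k"]) simp
        then show ?thesis using A(1) by simp
      qed
    next
      case B
      from IH B(2) have "l' = 1 + length w" by simp
      then have "\<exists>k<length (a # w). hh f1 f2 (a # w) k \<and> (\<forall>i<k. \<not> hh f1 f2 (a # w) i) \<and> l' = length (a # w) - k"
        using B(3) by (intro exI[of _ 0]) simp
      then show ?thesis using B(1) by simp
    next
      case C
      from IH C have "l' = l + 1 + length w" by simp
      then show ?thesis using C by simp
    qed
  qed
  show ?case using e rr1 rr2 lev by blast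
qed

lemma in_SS: "((p1,p2),q1,q2,l) \<in> SS \<longleftrightarrow>
   (p1,p2) \<in> Q12 \<delta>1 q01 \<delta>2 q02 \<and> q1 \<in> Q1 \<and> q2 \<in> Q2 \<and> l \<le> \<kappa> \<and> basic_bridge bar \<delta>1 \<delta>2 p1 p2 q1 q2"
  unfolding A_states_def by blast

lemma soundness:
  assumes "x \<in> A_lang bar \<kappa> Q1 \<delta>1 q01 F1 Q2 \<delta>2 q02 F2"
  shows "\<exists>\<beta>. Good x \<beta>"
proof -
  from assms obtain p q where p: "p \<in> II" and q: "q \<in> FF"
    and pth: "nfa_path (restr (trim_states SS TT II FF) TT) p x q"
    unfolding A_lang_def Let_def nfa_lang_def by blast
  have pth': "nfa_path TT p x q" using nfa_path_restr_mono[OF pth] .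
  obtain r1 r2 where pe: "p = ((q01, q02), r1, r2, 0)" using p unfolding A_init_def by blast
  obtain e1 e2 f1 f2 where qe: "q = ((e1, e2), f1, f2, \<kappa>)" using q unfolding A_final_def
    by (cases q) auto
  have "q \<in> SS" using q unfolding A_final_def by blast
  then obtain \<beta> where br: "dstep \<delta>1 e1 \<beta> = f1" "dstep \<delta>2 e2 (b \<beta>) = f2"
    unfolding qe in_SS basic_bridge_def by blast
  note ps = path_sound[OF pth' pe qe]
  have e: "e1 = D1 x" "e2 = D2 x" using ps by simp_all
  from ps kpos obtain k where k: "k < length x" "hh f1 f2 x k" "\<forall>i<k. \<not> hh f1 f2 x i" "\<kappa> = length x - k"
    by auto
  have hhM: "hh f1 f2 x i \<longleftrightarrow> M (x @ \<beta> @ b x) i" if "i \<le> length x" for i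
    unfolding M_dec[OF that] hh_def using br e by (simp add: dstep_append)
  have kk: "k = length x - \<kappa>" using k(1,4) by simp
  have c1: "\<kappa> \<le> length x" using k(1,4) by simp
  have c2: "M (x @ \<beta> @ b x) (length x - \<kappa>)" using hhM[of k] k(1,2) kk by simp
  have c3: "\<forall>j < length x - \<kappa>. \<not> M (x @ \<beta> @ b x) j"
  proof (intro allI impI)
    fix j assume "j < length x - \<kappa>"
    then have "j < k" "j \<le> length x" using kk k(1) by simp_all
    then show "\<not> M (x @ \<beta> @ b x) j" using hhM[of j] k(3) by blast
  qed
  have "Good x \<beta>" unfolding Good_def using c1 c2 c3 by blast
  then show ?thesis by blast
qed

end


context hp begin

lemma q0s: "q01 \<in> Q1" "q02 \<in> Q2" using d1 d2 by (simp_all add: complete_dfa_def)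

lemma completeness:
  assumes g: "Good x \<beta>"
  shows "x \<in> A_lang bar \<kappa> Q1 \<delta>1 q01 F1 Q2 \<delta>2 q02 F2"
proof -
  define k where "k = length x - \<kappa>"
  define f1 where "f1 = D1 (x @ \<beta>)"
  define f2 where "f2 = D2 (x @ b \<beta>)"
  define lev where "lev i = (if i \<le> k then 0 else i - k)" for i :: nat
  define \<sigma> where "\<sigma> i = ((D1 (take i x), D2 (take i x)), dstep \<delta>1 f1 (b (drop i x)),
      dstep \<delta>2 f2 (b (drop i x)), lev i)" for i
  have kx: "\<kappa> \<le> length x" using g by (simp add: Good_def)
  have kl: "k < length x" using kx kpos by (simp add: k_def)
  have f1Q: "f1 \<in> Q1" unfolding f1_def by (rule dstep_in[OF d1 q0s(1)])
  have f2Q: "f2 \<in> Q2" unfolding f2_def by (rule dstep_in[OF d2 q0s(2)])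
  have r1: "dstep \<delta>1 f1 (b (drop i x)) = D1 (x @ \<beta> @ b (drop i x))" for i
    by (simp add: f1_def dstep_append)
  have r2: "dstep \<delta>2 f2 (b (drop i x)) = D2 (x @ b \<beta> @ b (drop i x))" for i
    by (simp add: f2_def dstep_append)
  have hitM: "(dstep \<delta>1 f1 (b (drop i x)) \<in> F1 \<or> dstep \<delta>2 f2 (b (drop i x)) \<in> F2) \<longleftrightarrow> M (x @ \<beta> @ b x) i"
    if "i \<le> length x" for i
    unfolding r1 r2 M_dec[OF that] ..
  have \<sigma>S: "\<sigma> i \<in> SS" if "i \<le> length x" for i
  proof -
    have "(D1 (take i x), D2 (take i x)) \<in> Q12 \<delta>1 q01 \<delta>2 q02" unfolding Q12_def by blast
    moreover have "dstep \<delta>1 f1 (b (drop i x)) \<in> Q1" by (rule dstep_in[OF d1 f1Q])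
    moreover have "dstep \<delta>2 f2 (b (drop i x)) \<in> Q2" by (rule dstep_in[OF d2 f2Q])
    moreover have "lev i \<le> \<kappa>" using that kx unfolding lev_def k_def by (simp split: if_split) linarith
    moreover have "basic_bridge bar \<delta>1 \<delta>2 (D1 (take i x)) (D2 (take i x))
        (dstep \<delta>1 f1 (b (drop i x))) (dstep \<delta>2 f2 (b (drop i x)))"
      unfolding basic_bridge_def
    proof (intro exI[of _ "drop i x @ \<beta> @ b (drop i x)"] conjI)
      show "dstep \<delta>1 (D1 (take i x)) (drop i x @ \<beta> @ b (drop i x)) = dstep \<delta>1 f1 (b (drop i x))"
        unfolding r1 dstep_append[symmetric] by (metis append_take_drop_id append.assoc)
      show "dstep \<delta>2 (D2 (take i x)) (b (drop i x @ \<beta> @ b (drop i x))) = dstep \<delta>2 f2 (b (drop i x))"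
        unfolding r2 dstep_append[symmetric] by (simp del: append_assoc add: append_assoc[symmetric])
    qed
    ultimately show ?thesis unfolding \<sigma>_def in_SS by blast
  qed
  have tr: "TT (\<sigma> i) (x ! i) (\<sigma> (Suc i))" if i: "i < length x" for i
  proof -
    define a where "a = x ! i"
    define q1 where "q1 = dstep \<delta>1 f1 (b (drop (Suc i) x))"
    define q2 where "q2 = dstep \<delta>2 f2 (b (drop (Suc i) x))"
    have dr: "drop i x = a # drop (Suc i) x" using i by (simp add: a_def Cons_nth_drop_Suc)
    have tk: "take (Suc i) x = take i x @ [a]" using i by (simp add: a_def take_Suc_conv_app_nth)
    have e1: "dstep \<delta>1 f1 (b (drop i x)) = \<delta>1 q1 (bar a)"
      unfolding dr q1_def by (simp add: b_Cons dstep_snoc)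
    have e2: "dstep \<delta>2 f2 (b (drop i x)) = \<delta>2 q2 (bar a)"
      unfolding dr q2_def by (simp add: b_Cons dstep_snoc)
    have s1: "\<sigma> i = ((D1 (take i x), D2 (take i x)), \<delta>1 q1 (bar a), \<delta>2 q2 (bar a), lev i)"
      unfolding \<sigma>_def e1 e2 ..
    have s2: "\<sigma> (Suc i) = ((\<delta>1 (D1 (take i x)) a, \<delta>2 (D2 (take i x)) a), q1, q2, lev (Suc i))"
      unfolding \<sigma>_def tk q1_def q2_def by (simp add: dstep_snoc)
    have q1Q: "q1 \<in> Q1" unfolding q1_def by (rule dstep_in[OF d1 f1Q])
    have q2Q: "q2 \<in> Q2" unfolding q2_def by (rule dstep_in[OF d2 f2Q])
    have hit: "(\<delta>1 q1 (bar a) \<in> F1 \<or> \<delta>2 q2 (bar a) \<in> F2) \<longleftrightarrow> M (x @ \<beta> @ b x) i"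
      using hitM[of i] i e1 e2 by simp
    have lv: "(lev i = 0 \<and> lev (Suc i) = 0 \<and> \<delta>1 q1 (bar a) \<notin> F1 \<and> \<delta>2 q2 (bar a) \<notin> F2) \<or>
         (lev i = 0 \<and> lev (Suc i) = 1 \<and> (\<delta>1 q1 (bar a) \<in> F1 \<or> \<delta>2 q2 (bar a) \<in> F2)) \<or>
         (1 \<le> lev i \<and> lev i < \<kappa> \<and> lev (Suc i) = lev i + 1)"
    proof (cases "i < k")
      case True
      then have "\<not> M (x @ \<beta> @ b x) i" using g by (simp add: Good_def k_def)
      then show ?thesis using True hit by (simp add: lev_def)
    next
      case False
      show ?thesis
      proof (cases "i = k")
        case True
        then have "M (x @ \<beta> @ b x) i" using g by (simp add: Good_def k_def)
        then show ?thesis using True hit by (simp add: lev_def)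
      next
        case False
        then have "k < i" using \<open>\<not> i < k\<close> by simp
        then have "lev i = i - k" "lev (Suc i) = lev i + 1" "1 \<le> lev i" "lev i < \<kappa>"
          using i kx unfolding lev_def k_def by auto
        then show ?thesis by blast
      qed
    qed
    have ex: "\<exists>p1 p2 q1' q2' l l'. q1' \<in> Q1 \<and> q2' \<in> Q2 \<and>
        \<sigma> i = ((p1,p2), \<delta>1 q1' (bar a), \<delta>2 q2' (bar a), l) \<and>
        \<sigma> (Suc i) = ((\<delta>1 p1 a, \<delta>2 p2 a), q1', q2', l') \<and>
        ((l = 0 \<and> l' = 0 \<and> \<delta>1 q1' (bar a) \<notin> F1 \<and> \<delta>2 q2' (bar a) \<notin> F2) \<or>
         (l = 0 \<and> l' = 1 \<and> (\<delta>1 q1' (bar a) \<in> F1 \<or> \<delta>2 q2' (bar a) \<in> F2)) \<or>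
         (1 \<le> l \<and> l < \<kappa> \<and> l' = l + 1))"
      by (intro exI[of _ "D1 (take i x)"] exI[of _ "D2 (take i x)"] exI[of _ q1] exI[of _ q2]
          exI[of _ "lev i"] exI[of _ "lev (Suc i)"] conjI q1Q q2Q s1 s2 lv)
    have si: "\<sigma> i \<in> SS" "\<sigma> (Suc i) \<in> SS" using \<sigma>S i by simp_all
    show ?thesis unfolding A_trans_def a_def[symmetric] using si ex by blast
  qed
  have pth: "nfa_path TT (\<sigma> 0) x (\<sigma> (length x))"
    using nfa_path_seq[of x TT \<sigma>] tr by blast
  have s0S: "\<sigma> 0 \<in> SS" using \<sigma>S by simp
  have snS: "\<sigma> (length x) \<in> SS" using \<sigma>S by simp
  have s0I: "\<sigma> 0 \<in> II" unfolding A_init_def using s0S by (simp add: \<sigma>_def lev_def)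
  have snF: "\<sigma> (length x) \<in> FF" unfolding A_final_def using snS kl kx
    by (simp add: \<sigma>_def lev_def k_def)
  have rs: "restr SS TT = TT" by (rule restr_self[OF TT_S])
  have reach: "\<exists>p0 \<in> II \<inter> SS. \<exists>u. nfa_path TT p0 u (\<sigma> 0)"
    using s0I s0S by (intro bexI[of _ "\<sigma> 0"] exI[of _ "[]"]) auto
  have coreach: "\<exists>qf \<in> FF \<inter> SS. \<exists>v. nfa_path TT (\<sigma> (length x)) v qf"
    using snF snS by (intro bexI[of _ "\<sigma> (length x)"] exI[of _ "[]"]) auto
  have pth2: "nfa_path (restr (trim_states SS TT II FF) TT) (\<sigma> 0) x (\<sigma> (length x))"
    by (rule nfa_path_trim[OF TT_S pth s0S snS reach coreach])
  have t0: "\<sigma> 0 \<in> trim_states SS TT II FF"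
    unfolding trim_states_def rs using s0S reach snF snS pth by blast
  have tn: "\<sigma> (length x) \<in> trim_states SS TT II FF"
    unfolding trim_states_def rs using snS coreach s0I s0S pth by blast
  show ?thesis unfolding A_lang_def Let_def nfa_lang_def
    using pth2 t0 tn s0I snF by blast
qed

lemma A_lang_eq: "A_lang bar \<kappa> Q1 \<delta>1 q01 F1 Q2 \<delta>2 q02 F2 = {x. \<exists>\<beta>. Good x \<beta>}"
  using soundness completeness by blast

end


lemma not_inj_pair:
  fixes A :: "nat set"
  assumes "\<not> inj_on g A"
  shows "\<exists>i\<in>A. \<exists>i'\<in>A. i < i' \<and> g i = g i'"
proof -
  from assms obtain i i' where "i \<in> A" "i' \<in> A" "i \<noteq> i'" "g i = g i'"
    unfolding inj_on_def by blast
  then show ?thesis by (metis linorder_neqE_nat)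
qed

lemma short_word:
  assumes D: "complete_dfa Q \<delta> q0 F" and p: "p \<in> Q"
  shows "\<exists>w'. length w' \<le> card Q \<and> dstep \<delta> p w' = dstep \<delta> p w"
proof (induction "length w" arbitrary: w rule: less_induct)
  case less
  show ?case
  proof (cases "length w \<le> card Q")
    case True then show ?thesis by blast
  next
    case False
    define g where "g i = dstep \<delta> p (take i w)" for i
    have finQ: "finite Q" using D by (simp add: complete_dfa_def)
    have sub: "g ` {0..length w} \<subseteq> Q" using dstep_in[OF D p] by (auto simp: g_def)
    have "\<not> inj_on g {0..length w}"
    proof
      assume "inj_on g {0..length w}"
      from card_inj_on_le[OF this sub finQ] False show False by simp
    qed
    then obtain i i' where ii: "i \<le> length w" "i' \<le> length w" "i < i'" "g i = g i'"
      using not_inj_pair[of g "{0..length w}"] by auto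
    define w2 where "w2 = take i w @ drop i' w"
    have len: "length w2 < length w" using ii by (simp add: w2_def)
    have "dstep \<delta> p w2 = dstep \<delta> (g i') (drop i' w)"
      unfolding w2_def dstep_append g_def[symmetric] ii(4) ..
    also have "\<dots> = dstep \<delta> p w" unfolding g_def dstep_append[symmetric] by simp
    finally have eq: "dstep \<delta> p w2 = dstep \<delta> p w" .
    obtain w' where "length w' \<le> card Q" "dstep \<delta> p w' = dstep \<delta> p w2"
      using less(1)[OF len] by blast
    then show ?thesis using eq by auto
  qed
qed

lemma pump_contra:
  fixes H' :: "('a::finite) list set" and f :: "'a list \<Rightarrow> 'c" and Q :: "'s set"
  assumes sf: "sat H' f" and D: "complete_dfa Q \<delta> q0 F"
    and long: "\<And>V. V \<in> H' \<Longrightarrow> N0 \<le> length V \<Longrightarrow>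
       \<exists>j. 2 * (j + \<kappa>) \<le> length V \<and> dstep \<delta> q0 (take (length V - j) V) \<in> F"
  shows "\<exists>N. \<forall>x m z. N \<le> length x \<longrightarrow> length m \<le> card Q \<longrightarrow> length z = length x \<longrightarrow>
     x @ m @ z \<in> H' \<longrightarrow>
     (\<forall>j < length x - \<kappa>. dstep \<delta> q0 (take (length (x @ m @ z) - j) (x @ m @ z)) \<notin> F) \<longrightarrow> False"
proof -
  define c where "c u = (f u, dstep \<delta> q0 u)" for u
  have q0: "q0 \<in> Q" using D by (simp add: complete_dfa_def)
  have finQ: "finite Q" using D by (simp add: complete_dfa_def)
  have "range c \<subseteq> range f \<times> Q" using dstep_in[OF D q0] by (auto simp: c_def)
  moreover have "finite (range f \<times> Q)" using sf finQ unfolding sat_def by blast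
  ultimately have finc: "finite (range c)" by (rule finite_subset)
  define K where "K = card (range c)"
  define B where "B = card Q + 1"
  define N where "N = \<kappa> + K * B + N0 + 1"
  have main: False if x: "N \<le> length x" and m: "length m \<le> card Q" and z: "length z = length x"
    and inH: "x @ m @ z \<in> H'"
    and nh: "\<forall>j < length x - \<kappa>. dstep \<delta> q0 (take (length (x @ m @ z) - j) (x @ m @ z)) \<notin> F"
    for x m z :: "'a list"
  proof -
    define g where "g i = c (take (i * B) x)" for i
    have sub: "g ` {0..K} \<subseteq> range c" by (auto simp: g_def)
    have "\<not> inj_on g {0..K}"
    proof
      assume "inj_on g {0..K}"
      from card_inj_on_le[OF this sub finc] show False by (simp add: K_def)
    qed
    then obtain i i' where ii: "i \<le> K" "i' \<le> K" "i < i'" "g i = g i'"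
      using not_inj_pair[of g "{0..K}"] by auto
    define p where "p = i * B"
    define p' where "p' = i' * B"
    have p'x: "p' \<le> length x"
    proof -
      have "p' \<le> K * B" unfolding p'_def using ii(2) by (rule mult_le_mono1)
      then show ?thesis using x unfolding N_def by linarith
    qed
    have gap: "p + B \<le> p'"
    proof -
      have "(i + 1) * B \<le> i' * B" using ii(3) by (intro mult_le_mono1) simp
      then show ?thesis unfolding p_def p'_def by simp
    qed
    have pp: "p < p'" using gap by (simp add: B_def)
    have cf: "f (take p x) = f (take p' x)" and cd: "dstep \<delta> q0 (take p x) = dstep \<delta> q0 (take p' x)"
      using ii(4) unfolding g_def c_def p_def p'_def by simp_all
    define s where "s = drop p' x @ m @ z"
    have V1: "x @ m @ z = take p' x @ s" unfolding s_def by simp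
    define V where "V = take p x @ s"
    have VH: "V \<in> H'" using satD[OF sf cf[symmetric], of s] inH unfolding V_def V1 by simp
    have lp: "length (take p x) = p" "length (take p' x) = p'" using pp p'x by simp_all
    have ls: "length s = length x - p' + length m + length x" unfolding s_def using z by simp
    have lV: "length V = p + length s" unfolding V_def using lp by simp
    have "N0 \<le> length V" using lV ls x unfolding N_def by linarith
    from long[OF VH this] obtain j where j: "2 * (j + \<kappa>) \<le> length V"
      "dstep \<delta> q0 (take (length V - j) V) \<in> F" by blast
    have "length V < 2 * length x" using lV ls gap m p'x unfolding B_def by linarith
    then have "j + \<kappa> < length x" using j(1) by simp
    then have jx: "j < length x - \<kappa>" by simp
    have js: "j \<le> length s" using ls jx by linarith
    have t1: "take (length V - j) V = take p x @ take (length s - j) s"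
      unfolding V_def using lp js by (simp add: lV)
    have lV1: "length (x @ m @ z) = p' + length s" unfolding V1 using lp by simp
    have t2: "take (length (x @ m @ z) - j) (x @ m @ z) = take p' x @ take (length s - j) s"
      unfolding V1 using lp js by (simp add: lV1[unfolded V1])
    have "dstep \<delta> q0 (take (length (x @ m @ z) - j) (x @ m @ z)) \<in> F"
      using j(2) unfolding t1 t2 dstep_append cd .
    then show False using nh jx by blast
  qed
  show ?thesis using main by blast
qed



lemma finite_bounded_len: "finite S \<Longrightarrow> \<exists>Mx. \<forall>w\<in>S. length w \<le> Mx"
  by (metis finite_imageI finite_nat_set_iff_bounded_le image_eqI)

lemma infinite_long: "infinite (S :: ('a::finite) list set) \<Longrightarrow> \<exists>x\<in>S. n \<le> length x"
proof (rule ccontr)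
  assume inf: "infinite S" and "\<not> (\<exists>x\<in>S. n \<le> length x)"
  then have "S \<subseteq> {xs. length xs \<le> n}" by auto
  then show False using inf finite_len_le[of n] finite_subset by blast
qed

context hp begin

lemma part2_L2fin:
  assumes inf: "infinite {x. \<exists>\<beta>. Good x \<beta>}" and fin: "finite (dfa_lang \<delta>2 q02 F2)"
    and reg: "regular (hairpin bar \<kappa> L1 L2)"
  shows False
proof -
  let ?H = "{W. \<exists>j. dec W j \<and> M W j}"
  obtain f :: "'a list \<Rightarrow> nat" where sf: "sat ?H f"
    using sat_of_regular reg unfolding H_char by blast
  obtain Mx where Mx: "\<forall>w\<in>dfa_lang \<delta>2 q02 F2. length w \<le> Mx" using finite_bounded_len[OF fin] by blast
  have long: "\<exists>j. 2 * (j + \<kappa>) \<le> length V \<and> D1 (take (length V - j) V) \<in> F1"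
    if V: "V \<in> ?H" "2 * Mx + 2 \<le> length V" for V
  proof -
    from V(1) obtain j where j: "dec V j" "M V j" by blast
    have jl: "2 * (j + \<kappa>) \<le> length V" using dec_len[OF j(1)] .
    have "\<not> D2 (take (length V - j) (b V)) \<in> F2"
    proof
      assume "D2 (take (length V - j) (b V)) \<in> F2"
      then have "length (take (length V - j) (b V)) \<le> Mx" using Mx by (auto simp: dfa_lang_def)
      then show False using jl V(2) by simp
    qed
    then show ?thesis using j(2) jl unfolding M_def by blast
  qed
  obtain N where N: "\<forall>x m z. N \<le> length x \<longrightarrow> length m \<le> card Q1 \<longrightarrow> length z = length x \<longrightarrow>
     x @ m @ z \<in> ?H \<longrightarrow>
     (\<forall>j < length x - \<kappa>. D1 (take (length (x @ m @ z) - j) (x @ m @ z)) \<notin> F1) \<longrightarrow> False"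
    using pump_contra[OF sf d1, of "2 * Mx + 2" \<kappa>] long by blast
  obtain x where xG: "x \<in> {x. \<exists>\<beta>. Good x \<beta>}" and xl: "N + 2 * Mx + 2 \<le> length x"
    using infinite_long[OF inf] by blast
  then obtain \<beta> where g: "Good x \<beta>" by blast
  define j0 where "j0 = length x - \<kappa>"
  have kx: "\<kappa> \<le> length x" using g by (simp add: Good_def)
  have j0x: "j0 \<le> length x" by (simp add: j0_def)
  have "M (x @ \<beta> @ b x) j0" using g by (simp add: Good_def j0_def)
  then have hit0: "D1 (x @ \<beta> @ b (drop j0 x)) \<in> F1 \<or> D2 (x @ b \<beta> @ b (drop j0 x)) \<in> F2"
    unfolding M_dec[OF j0x] .
  have "D2 (x @ b \<beta> @ b (drop j0 x)) \<notin> F2"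
  proof
    assume "D2 (x @ b \<beta> @ b (drop j0 x)) \<in> F2"
    then have "length (x @ b \<beta> @ b (drop j0 x)) \<le> Mx" using Mx by (auto simp: dfa_lang_def)
    then show False using xl by simp
  qed
  with hit0 have hit: "D1 (x @ \<beta> @ b (drop j0 x)) \<in> F1" by blast
  obtain m where m: "length m \<le> card Q1" "dstep \<delta>1 (D1 x) m = dstep \<delta>1 (D1 x) \<beta>"
    using short_word[OF d1 dstep_in[OF d1 q0s(1)]] by blast
  have Dm: "D1 (x @ m @ w) = D1 (x @ \<beta> @ w)" for w
    using m(2) by (simp add: dstep_append)
  have "dec (x @ m @ b x) j0" unfolding dec_def j0_def using kx by auto
  moreover have "M (x @ m @ b x) j0" unfolding M_dec[OF j0x] Dm using hit by blast
  ultimately have inH: "x @ m @ b x \<in> ?H" by blast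
  have nh: "\<forall>j < length x - \<kappa>. D1 (take (length (x @ m @ b x) - j) (x @ m @ b x)) \<notin> F1"
  proof (intro allI impI)
    fix j assume j: "j < length x - \<kappa>"
    then have jx: "j \<le> length x" by simp
    have "\<not> M (x @ \<beta> @ b x) j" using g j by (simp add: Good_def)
    then have "D1 (x @ \<beta> @ b (drop j x)) \<notin> F1" unfolding M_dec[OF jx] by blast
    then show "D1 (take (length (x @ m @ b x) - j) (x @ m @ b x)) \<notin> F1"
      unfolding take_dec[OF jx] Dm .
  qed
  have "N \<le> length x" using xl by simp
  moreover have "length (b x) = length x" by simp
  ultimately show False using N m(1) inH nh by blast
qed

lemma part2_L1fin:
  assumes inf: "infinite {x. \<exists>\<beta>. Good x \<beta>}" and fin: "finite L1"
    and reg: "regular (hairpin bar \<kappa> L1 L2)"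
  shows False
proof -
  let ?H = "{W. \<exists>j. dec W j \<and> M W j}"
  have regb: "regular (b ` ?H)" using regular_b reg unfolding H_char by blast
  obtain f :: "'a list \<Rightarrow> nat" where sf: "sat (b ` ?H) f"
    using sat_of_regular regb by blast
  obtain Mx where Mx: "\<forall>w\<in>L1. length w \<le> Mx" using finite_bounded_len[OF fin] by blast
  have long: "\<exists>j. 2 * (j + \<kappa>) \<le> length V \<and> D2 (take (length V - j) V) \<in> F2"
    if V: "V \<in> b ` ?H" "2 * Mx + 2 \<le> length V" for V
  proof -
    from V(1) have "b V \<in> ?H" by (simp add: mem_b_image)
    then obtain j where j: "dec (b V) j" "M (b V) j" by blast
    have jl: "2 * (j + \<kappa>) \<le> length V" using dec_len[OF j(1)] by simp
    have "\<not> D1 (take (length (b V) - j) (b V)) \<in> F1"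
    proof
      assume "D1 (take (length (b V) - j) (b V)) \<in> F1"
      then have "length (take (length (b V) - j) (b V)) \<le> Mx" using Mx by (auto simp: dfa_lang_def)
      then show False using jl V(2) by simp
    qed
    then show ?thesis using j(2) jl unfolding M_def by auto
  qed
  obtain N where N: "\<forall>x m z. N \<le> length x \<longrightarrow> length m \<le> card Q2 \<longrightarrow> length z = length x \<longrightarrow>
     x @ m @ z \<in> b ` ?H \<longrightarrow>
     (\<forall>j < length x - \<kappa>. D2 (take (length (x @ m @ z) - j) (x @ m @ z)) \<notin> F2) \<longrightarrow> False"
    using pump_contra[OF sf d2, of "2 * Mx + 2" \<kappa>] long by blast
  obtain x where xG: "x \<in> {x. \<exists>\<beta>. Good x \<beta>}" and xl: "N + 2 * Mx + 2 \<le> length x"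
    using infinite_long[OF inf] by blast
  then obtain \<beta> where g: "Good x \<beta>" by blast
  define j0 where "j0 = length x - \<kappa>"
  have kx: "\<kappa> \<le> length x" using g by (simp add: Good_def)
  have j0x: "j0 \<le> length x" by (simp add: j0_def)
  have "M (x @ \<beta> @ b x) j0" using g by (simp add: Good_def j0_def)
  then have hit0: "D1 (x @ \<beta> @ b (drop j0 x)) \<in> F1 \<or> D2 (x @ b \<beta> @ b (drop j0 x)) \<in> F2"
    unfolding M_dec[OF j0x] .
  have "D1 (x @ \<beta> @ b (drop j0 x)) \<notin> F1"
  proof
    assume "D1 (x @ \<beta> @ b (drop j0 x)) \<in> F1"
    then have "length (x @ \<beta> @ b (drop j0 x)) \<le> Mx" using Mx by (auto simp: dfa_lang_def)
    then show False using xl by simp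
  qed
  with hit0 have hit: "D2 (x @ b \<beta> @ b (drop j0 x)) \<in> F2" by blast
  obtain m where m: "length m \<le> card Q2" "dstep \<delta>2 (D2 x) m = dstep \<delta>2 (D2 x) (b \<beta>)"
    using short_word[OF d2 dstep_in[OF d2 q0s(2)]] by blast
  have Dm: "D2 (x @ m @ w) = D2 (x @ b \<beta> @ w)" for w
    using m(2) by (simp add: dstep_append)
  define W1 where "W1 = x @ b m @ b x"
  have bW1: "b W1 = x @ m @ b x" by (simp add: W1_def)
  have "dec W1 j0" unfolding dec_def j0_def W1_def using kx by auto
  moreover have "M W1 j0" unfolding W1_def M_dec[OF j0x] b_b Dm using hit by blast
  ultimately have "W1 \<in> ?H" by blast
  then have inH: "x @ m @ b x \<in> b ` ?H" unfolding bW1[symmetric] by blast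
  have nh: "\<forall>j < length x - \<kappa>. D2 (take (length (x @ m @ b x) - j) (x @ m @ b x)) \<notin> F2"
  proof (intro allI impI)
    fix j assume j: "j < length x - \<kappa>"
    then have jx: "j \<le> length x" by simp
    have "\<not> M (x @ \<beta> @ b x) j" using g j by (simp add: Good_def)
    then have "D2 (x @ b \<beta> @ b (drop j x)) \<notin> F2" unfolding M_dec[OF jx] by blast
    then show "D2 (take (length (x @ m @ b x) - j) (x @ m @ b x)) \<notin> F2"
      unfolding take_dec[OF jx] Dm .
  qed
  have "N \<le> length x" using xl by simp
  moreover have "length (b x) = length x" by simp
  ultimately show False using N m(1) inH nh by blast
qed

end


theorem proposition1:
  fixes bar :: "'a::finite \<Rightarrow> 'a" and \<kappa> :: nat
    and L1 L2 :: "'a list set"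
    and Q1 :: "'s1 set" and \<delta>1 :: "'s1 \<Rightarrow> 'a \<Rightarrow> 's1" and q01 :: 's1 and F1 :: "'s1 set"
    and Q2 :: "'s2 set" and \<delta>2 :: "'s2 \<Rightarrow> 'a \<Rightarrow> 's2" and q02 :: 's2 and F2 :: "'s2 set"
  assumes "card (UNIV :: 'a set) \<ge> 2"
    and "\<And>a. bar (bar a) = a"
    and "\<kappa> > 0"
    and "complete_dfa Q1 \<delta>1 q01 F1" and "dfa_lang \<delta>1 q01 F1 = L1"
    and "complete_dfa Q2 \<delta>2 q02 F2" and "dfa_lang \<delta>2 q02 F2 = bar_lang bar L2"
  shows "(finite (A_lang bar \<kappa> Q1 \<delta>1 q01 F1 Q2 \<delta>2 q02 F2) \<longrightarrow> regular (hairpin bar \<kappa> L1 L2))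
       \<and> (infinite (A_lang bar \<kappa> Q1 \<delta>1 q01 F1 Q2 \<delta>2 q02 F2) \<and> (finite L1 \<or> finite L2)
            \<longrightarrow> \<not> regular (hairpin bar \<kappa> L1 L2))"
proof -
  interpret hp bar \<kappa> Q1 \<delta>1 q01 F1 Q2 \<delta>2 q02 F2
    using assms by unfold_locales auto
  have eL2: "L2 = bar_lang bar (dfa_lang \<delta>2 q02 F2)"
    unfolding assms(7) by (auto simp: mem_bar_lang bar_lang_def mem_b_image)
  have eL1: "L1 = dfa_lang \<delta>1 q01 F1" using assms(5) by simp
  show ?thesis
  proof (intro conjI impI)
    assume "finite (A_lang bar \<kappa> Q1 \<delta>1 q01 F1 Q2 \<delta>2 q02 F2)"
    then show "regular (hairpin bar \<kappa> L1 L2)"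
      unfolding eL1 eL2 A_lang_eq by (rule part1)
  next
    assume a: "infinite (A_lang bar \<kappa> Q1 \<delta>1 q01 F1 Q2 \<delta>2 q02 F2) \<and> (finite L1 \<or> finite L2)"
    then have inf: "infinite {x. \<exists>\<beta>. Good x \<beta>}" unfolding A_lang_eq by blast
    show "\<not> regular (hairpin bar \<kappa> L1 L2)"
    proof
      assume reg: "regular (hairpin bar \<kappa> L1 L2)"
      from a consider "finite L1" | "finite L2" by blast
      then show False
      proof cases
        case 1
        then show False using part2_L1fin[OF inf] reg unfolding eL1 eL2 by blast
      next
        case 2
        then have "finite (dfa_lang \<delta>2 q02 F2)" unfolding assms(7) bar_lang_def by simp
        then show False using part2_L2fin[OF inf] reg unfolding eL1 eL2 by blast
      qed
    qed
  qed
qed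


end
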